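(* Let $m,n$ be nonnegative integers with $0\leqslant m\leqslant n$, let $\varepsilon\in\{+1,-1\}$, and let $z\in\mathbb{C}\setminus(-\infty,1]$. Then \begin{align*} \frac{\mathrm{d}^{m}}{\mathrm{d}z^{m}}\bigl[P_{n}(z)\ln(z+\varepsilon)\bigr] &= \frac{(2m)!}{2^{m}m!}C_{n-m}^{(m+1/2)}(z)\ln(z+\varepsilon) +\frac{(2m)!}{2^{m}m!}[\psi(n+1)-\psi(n-m+1)]C_{n-m}^{(m+1/2)}(z)\\ &\quad -\frac{\varepsilon^{n+m}}{2^{m}}\sum_{k=0}^{n-m}\varepsilon^{k}\frac{(k+n+m)!\,\psi(k+n+m+1)}{k!\,(k+m)!\,(n-m-k)!}\left(\frac{z-\varepsilon}{2}\right)^{k}\\ &\quad +\varepsilon^{n}\frac{(n+m)!}{(n-m)!}(z+\varepsilon)^{-m}\sum_{k=0}^{n}\varepsilon^{k}\frac{(k+n)!\,\psi(k+n+1)}{k!\,(k+m)!\,(n-k)!}\left(\frac{z-\varepsilon}{2}\right)^{k}. \end{align*}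
   Context: $P_n(z)$ denotes the Legendre polynomial of degree $n$. $C_{j}^{(\alpha)}(z)$ denotes the Gegenbauer (ultraspherical) polynomial of degree $j$ and parameter $\alpha$. $\psi(\zeta)=\Gamma'(\zeta)/\Gamma(\zeta)$ is the digamma function. The complex plane is cut along the real axis from $-\infty$ to $+1$; for $z\in\mathbb{C}\setminus(-\infty,1]$, $\ln(z\pm1)$ denotes the principal branch of the logarithm. The case $\varepsilon=+1$ concerns $\ln(z+1)$ and the case $\varepsilon=-1$ concerns $\ln(z-1)$. *)

theory Defs
  imports "HOL-Analysis.Analysis"
begin

definition Legendre_P :: "nat \<Rightarrow> complex \<Rightarrow> complex" where
  "Legendre_P n z = (\<Sum>k\<le>n div 2. (-1)^k * of_nat (fact (2*n - 2*k))
      / (2^n * of_nat (fact k) * of_nat (fact (n - k)) * of_nat (fact (n - 2*k))) * z^(n - 2*k))"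

definition Gegenbauer_C :: "nat \<Rightarrow> complex \<Rightarrow> complex \<Rightarrow> complex" where
  "Gegenbauer_C j \<alpha> z = (\<Sum>k\<le>j div 2. (-1)^k * pochhammer \<alpha> (j - k)
      / (of_nat (fact k) * of_nat (fact (j - 2*k))) * (2*z)^(j - 2*k))"

end

theory Submission
  imports Defs "HOL-Computational_Algebra.Polynomial"
begin

lemma coeff_monsum: "coeff (\<Sum>k\<le>N. monom (c k) k) i = (if i \<le> N then c i else 0)"
  by (simp add: coeff_sum coeff_monom)

definition bc :: "nat \<Rightarrow> nat \<Rightarrow> nat \<Rightarrow> complex" where
  "bc n m k = of_nat (fact (k + n + m)) / (of_nat (fact k) * of_nat (fact (k + m)) * of_nat (fact (n - m - k)))"
definition dc :: "nat \<Rightarrow> nat \<Rightarrow> nat \<Rightarrow> complex" where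
  "dc n m k = of_nat (fact (k + n)) / (of_nat (fact k) * of_nat (fact (k + m)) * of_nat (fact (n - k)))"
definition KK :: "nat \<Rightarrow> nat \<Rightarrow> complex" where
  "KK n m = of_nat (fact (n + m)) / of_nat (fact (n - m))"

definition BW :: "nat \<Rightarrow> nat \<Rightarrow> (nat \<Rightarrow> complex) \<Rightarrow> complex poly" where
  "BW n m f = (\<Sum>k\<le>n-m. monom (bc n m k * f (k+n+m)) k)"
definition DW :: "nat \<Rightarrow> nat \<Rightarrow> (nat \<Rightarrow> complex) \<Rightarrow> complex poly" where
  "DW n m f = (\<Sum>k\<le>n. monom (dc n m k * f (k+n)) k)"

lemma bc_shift: assumes "Suc i \<le> n - m"
  shows "of_nat (Suc i) * bc n m (Suc i) = bc n (Suc m) i"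
proof -
  have e1: "n - m - Suc i = n - Suc m - i" using assms by simp
  have e2: "Suc i + n + m = i + n + Suc m" "Suc i + m = i + Suc m" by simp_all
  have f: "(fact (Suc i) :: complex) = of_nat (Suc i) * fact i" by (simp add: fact_Suc)
  show ?thesis unfolding bc_def e2 e1 of_nat_fact f
    by (simp add: field_simps del: of_nat_Suc)
qed

lemma pderiv_BW: assumes "m < n" shows "pderiv (BW n m f) = BW n (Suc m) f"
proof (rule poly_eqI)
  fix i
  show "coeff (pderiv (BW n m f)) i = coeff (BW n (Suc m) f) i"
    unfolding coeff_pderiv BW_def coeff_monsum
    using bc_shift[of i n m] assms
    by (auto simp: mult.assoc[symmetric] simp del: of_nat_Suc)
qed

lemma coeff_s_pderiv: "coeff ([:1,1:] * pderiv p) i = of_nat (Suc i) * coeff p (Suc i) + of_nat i * coeff p i"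
proof -
  have "[:1,1:] * pderiv p = pderiv p + pCons 0 (pderiv p)" by simp
  then show ?thesis by (cases i) (simp_all add: coeff_pderiv algebra_simps)
qed

lemma dc_shift1: "dc n (Suc m) i * (of_nat i + of_nat m + 1) = dc n m i"
proof -
  have e: "i + Suc m = Suc (i + m)" by simp
  define x :: complex where "x = of_nat i + of_nat m + 1"
  have x: "x \<noteq> 0" unfolding x_def by (metis of_nat_1 of_nat_add of_nat_eq_0_iff add_is_0 one_neq_zero)
  have f: "(fact (Suc (i+m)) :: complex) = x * fact (i+m)" by (simp add: fact_Suc x_def add_ac)
  show ?thesis unfolding dc_def e of_nat_fact f x_def[symmetric] using x by (simp add: field_simps)
qed

lemma dc_shift2: assumes "i < n"
  shows "of_nat (Suc i) * dc n m (Suc i) * (of_nat i + of_nat m + 1) = dc n m i * (of_nat n + of_nat i + 1) * (of_nat n - of_nat i)"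
proof -
  have e1: "n - i = Suc (n - Suc i)" using assms by simp
  have e2: "Suc i + n = Suc (i + n)" "Suc i + m = Suc (i + m)" by simp_all
  have f1: "(fact (Suc i) :: complex) = of_nat (Suc i) * fact i" by (simp add: fact_Suc)
  define x :: complex where "x = of_nat i + of_nat m + 1"
  have x: "x \<noteq> 0" unfolding x_def by (metis of_nat_1 of_nat_add of_nat_eq_0_iff add_is_0 one_neq_zero)
  define y :: complex where "y = of_nat n + of_nat i + 1"
  have y: "y \<noteq> 0" unfolding y_def by (metis of_nat_1 of_nat_add of_nat_eq_0_iff add_is_0 one_neq_zero)
  define z :: complex where "z = of_nat n - of_nat i"
  have z: "z \<noteq> 0" unfolding z_def using assms by simp
  define w :: complex where "w = of_nat (Suc i)"
  have w: "w \<noteq> 0" unfolding w_def by (metis of_nat_eq_0_iff nat.distinct(1))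
  have f1: "(fact (Suc i) :: complex) = w * fact i" by (simp add: fact_Suc w_def)
  have f2: "(fact (Suc (i+n)) :: complex) = y * fact (i+n)" by (simp add: fact_Suc y_def add_ac)
  have f3: "(fact (Suc (i+m)) :: complex) = x * fact (i+m)" by (simp add: fact_Suc x_def add_ac)
  have f4: "(fact (Suc (n - Suc i)) :: complex) = z * fact (n - Suc i)"
    using assms by (simp add: fact_Suc of_nat_diff z_def)
  show ?thesis unfolding dc_def e2 e1 of_nat_fact f1 f2 f3 f4 x_def[symmetric] y_def[symmetric] z_def[symmetric] w_def[symmetric]
    using x y z w by (simp add: field_simps)
qed

lemma KK_shift: assumes "m < n" shows "KK n (Suc m) = KK n m * (of_nat n + of_nat m + 1) * (of_nat n - of_nat m)"
proof -
  have e1: "n - m = Suc (n - Suc m)" using assms by simp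
  define y :: complex where "y = of_nat n + of_nat m + 1"
  define z :: complex where "z = of_nat n - of_nat m"
  have z: "z \<noteq> 0" unfolding z_def using assms by simp
  have f2: "(fact (Suc (n+m)) :: complex) = y * fact (n+m)" by (simp add: fact_Suc y_def add_ac)
  have f4: "(fact (Suc (n - Suc m)) :: complex) = z * fact (n - Suc m)"
    using assms by (simp add: fact_Suc of_nat_diff z_def)
  show ?thesis unfolding KK_def e1 add_Suc_right of_nat_fact f2 f4 y_def[symmetric] z_def[symmetric]
    using z by (simp add: field_simps)
qed

lemma coeff_DW: "coeff (DW n m f) i = (if i \<le> n then dc n m i * f (i+n) else 0)"
  unfolding DW_def coeff_monsum by simp

lemma alg1:
  fixes K K' d d' X N M I :: complex
  assumes "K' = K*(N+M+1)*(N-M)" "d'*(I+M+1) = d" "X*(I+M+1) = d*(N+I+1)*(N-I)" "I+M+1 \<noteq> 0"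
  shows "K*(X + I*d - M*d) = K'*d'"
proof -
  have "K*(X + I*d - M*d)*(I+M+1) = K'*d'*(I+M+1)"
  proof -
    have "K*(X + I*d - M*d)*(I+M+1) = K*(X*(I+M+1)) + K*(I-M)*d*(I+M+1)" by (simp add: algebra_simps)
    also have "\<dots> = K*d*((N+I+1)*(N-I) + (I-M)*(I+M+1))" by (subst assms(3)) (simp add: algebra_simps)
    also have "(N+I+1)*(N-I) + (I-M)*(I+M+1) = (N+M+1)*(N-M)" by (simp add: algebra_simps)
    also have "K*d*((N+M+1)*(N-M)) = K'*(d'*(I+M+1))" unfolding assms(2) assms(1) by (simp add: algebra_simps)
    finally show ?thesis by (simp add: algebra_simps)
  qed
  then show ?thesis using assms(4) by simp
qed

lemma alg2:
  fixes K K' d d' X N M I p p1 :: complex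
  assumes "K' = K*(N+M+1)*(N-M)" "d'*(I+M+1) = d" "X*(I+M+1) = d*(N+I+1)*(N-I)" "I+M+1 \<noteq> 0"
    "N - M \<noteq> 0" "N+I+1 \<noteq> 0" "p1 = p + 1/(N+I+1)"
  shows "K*d - K'/(N-M)*d' = K*(M*(d*p) - (X*p1 + I*(d*p))) + K'*(d'*p)"
proof -
  define a where "a = 1/(I+M+1)"
  define b where "b = 1/(N+I+1)"
  define c where "c = 1/(N-M)"
  have ha: "a*(I+M+1) = 1" using assms(4) unfolding a_def by simp
  have hb: "b*(N+I+1) = 1" using assms(6) unfolding b_def by simp
  have hc: "c*(N-M) = 1" using assms(5) unfolding c_def by simp
  have X: "X = d*(N+I+1)*(N-I)*a" using assms(3,4) unfolding a_def by (simp add: field_simps)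
  have d': "d' = d*a" using assms(2,4) unfolding a_def by (simp add: field_simps)
  have p1: "p1 = p + b" using assms(7) unfolding b_def by simp
  have k: "K'/(N-M) = K'*c" unfolding c_def by simp
  show ?thesis unfolding X d' p1 k unfolding assms(1) using ha hb hc by algebra
qed

lemma nz1: "(of_nat i + of_nat m + 1 :: complex) \<noteq> 0"
  by (metis of_nat_1 of_nat_add of_nat_eq_0_iff add_is_0 one_neq_zero)

lemma C_step:
  assumes "m < n" and f1: "f = (\<lambda>_. 1)"
  shows "smult (KK n m) ([:1,1:] * pderiv (DW n m f) - smult (of_nat m) (DW n m f)) = smult (KK n (Suc m)) (DW n (Suc m) f)"

proof (rule poly_eqI)
  fix i
  show "coeff (smult (KK n m) ([:1,1:] * pderiv (DW n m f) - smult (of_nat m) (DW n m f))) i = coeff (smult (KK n (Suc m)) (DW n (Suc m) f)) i"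
  proof (cases "i < n")
    case True
    show ?thesis unfolding coeff_smult coeff_diff coeff_s_pderiv coeff_DW f1
      using True alg1[OF KK_shift[OF assms(1)] dc_shift1 dc_shift2[OF True] nz1] by (simp add: algebra_simps)
  next
    case False
    show ?thesis
    proof (cases "i = n")
      case True
      have "0 * (of_nat i + of_nat m + 1) = dc n m i * (of_nat n + of_nat i + 1) * (of_nat n - of_nat i)" using True by simp
      from alg1[OF KK_shift[OF assms(1)] dc_shift1 this nz1] True
      show ?thesis unfolding coeff_smult coeff_diff coeff_s_pderiv coeff_DW f1 by (simp add: algebra_simps)
    next
      case False
      then show ?thesis using \<open>\<not> i < n\<close> unfolding coeff_smult coeff_diff coeff_s_pderiv coeff_DW by simp
    qed
  qed
qed

definition psi :: "nat \<Rightarrow> complex" where "psi j = Digamma (of_nat (j+1))"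

lemma psi_Suc: "psi (Suc j) = psi j + 1 / (of_nat j + 1)"
proof -
  have nz: "(of_nat (j+1) :: complex) \<noteq> 0" by (metis of_nat_eq_0_iff add_is_0 one_neq_zero)
  have "Digamma (of_nat (Suc j + 1) :: complex) = Digamma (of_nat (j+1) + 1)" by simp
  also have "\<dots> = Digamma (of_nat (j+1)) + 1 / of_nat (j+1)" by (rule Digamma_plus1[OF nz])
  finally show ?thesis unfolding psi_def by (simp add: add_ac)
qed

lemma M_step:
  assumes "m < n"
  shows "smult (KK n m) (DW n m (\<lambda>_. 1)) - smult (KK n (Suc m) / (of_nat n - of_nat m)) (DW n (Suc m) (\<lambda>_. 1))
    = smult (KK n m) (smult (of_nat m) (DW n m psi) - [:1,1:] * pderiv (DW n m psi)) + smult (KK n (Suc m)) (DW n (Suc m) psi)"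
proof (rule poly_eqI)
  fix i
  have nm: "(of_nat n - of_nat m :: complex) \<noteq> 0" using assms by simp
  have ni: "(of_nat n + of_nat i + 1 :: complex) \<noteq> 0" using nz1[of n i] .
  have ps: "psi (Suc i + n) = psi (i+n) + 1/(of_nat n + of_nat i + 1)" using psi_Suc[of "i+n"] by (simp add: add_ac)
  show "coeff (smult (KK n m) (DW n m (\<lambda>_. 1)) - smult (KK n (Suc m) / (of_nat n - of_nat m)) (DW n (Suc m) (\<lambda>_. 1))) i =
    coeff (smult (KK n m) (smult (of_nat m) (DW n m psi) - [:1,1:] * pderiv (DW n m psi)) + smult (KK n (Suc m)) (DW n (Suc m) psi)) i"
  proof (cases "i < n")
    case True
    show ?thesis unfolding coeff_smult coeff_diff coeff_add coeff_s_pderiv coeff_DW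
      using True alg2[OF KK_shift[OF assms(1)] dc_shift1 dc_shift2[OF True] nz1 nm ni ps] by (simp add: algebra_simps)
  next
    case False
    show ?thesis
    proof (cases "i = n")
      case True
      have "0 * (of_nat i + of_nat m + 1) = dc n m i * (of_nat n + of_nat i + 1) * (of_nat n - of_nat i)" using True by simp
      from alg2[OF KK_shift[OF assms(1)] dc_shift1 this nz1 nm ni ps] True
      show ?thesis unfolding coeff_smult coeff_diff coeff_add coeff_s_pderiv coeff_DW by (simp add: algebra_simps)
    next
      case False
      then show ?thesis using \<open>\<not> i < n\<close> unfolding coeff_smult coeff_diff coeff_add coeff_s_pderiv coeff_DW by simp
    qed
  qed
qed

lemma s_pderiv_pow: "[:1,1:] * pderiv ([:1,1:]^m :: complex poly) = smult (of_nat m) ([:1,1:]^m)"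
proof (cases m)
  case 0 then show ?thesis by simp
next
  case (Suc k)
  have p1: "pderiv [:1,1:] = (1 :: complex poly)" by (simp add: pderiv_pCons)
  have "pderiv ([:1,1:]^m :: complex poly) = smult (of_nat m) ([:1,1:]^k)"
    unfolding Suc pderiv_power_Suc p1 by simp
  then have "[:1,1:] * pderiv ([:1,1:]^m :: complex poly) = smult (of_nat m) ([:1,1:] * [:1,1:]^k)"
    by (simp only: mult_smult_right)
  then show ?thesis unfolding Suc by (simp only: power_Suc)
qed

lemma C_id: "m \<le> n \<Longrightarrow> [:1,1:]^m * BW n m (\<lambda>_. 1) = smult (KK n m) (DW n m (\<lambda>_. 1))"
proof (induction m)
  case 0
  show ?case unfolding BW_def DW_def KK_def bc_def dc_def by simp
next
  case (Suc m)
  then have mn: "m < n" by simp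
  note IH = Suc.IH[OF less_imp_le[OF mn]]
  let ?s = "[:1,1:] :: complex poly"
  let ?B = "BW n m (\<lambda>_. 1)" and ?D = "DW n m (\<lambda>_. 1)"
  have "?s * pderiv (?s^m * ?B) = ?s * pderiv (smult (KK n m) ?D)" using IH by simp
  then have "(?s * pderiv (?s^m)) * ?B + ?s^Suc m * pderiv ?B = smult (KK n m) (?s * pderiv ?D)"
    by (simp add: pderiv_mult pderiv_smult algebra_simps)
  then have "smult (of_nat m) (?s^m * ?B) + ?s^Suc m * pderiv ?B = smult (KK n m) (?s * pderiv ?D)"
    unfolding s_pderiv_pow by (simp only: mult_smult_left)
  then have "smult (of_nat m) (smult (KK n m) ?D) + ?s^Suc m * pderiv ?B = smult (KK n m) (?s * pderiv ?D)"
    unfolding IH .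
  then have "?s^Suc m * pderiv ?B = smult (KK n m) (?s * pderiv ?D) - smult (of_nat m) (smult (KK n m) ?D)"
    by (metis add_diff_cancel_left')
  also have "\<dots> = smult (KK n m) (?s * pderiv ?D - smult (of_nat m) ?D)"
    by (simp only: smult_diff_right smult_smult mult.commute)
  finally have "?s^Suc m * pderiv ?B = smult (KK n m) (?s * pderiv ?D - smult (of_nat m) ?D)" .
  then show ?case unfolding pderiv_BW[OF mn] C_step[OF mn refl] .
qed

lemma coeff_par: "coeff (\<Sum>k\<le>N div 2. monom (c k) (N - 2*k)) i = (if i \<le> N \<and> even (N - i) then c ((N - i) div 2) else 0)"
proof -
  have "coeff (\<Sum>k\<le>N div 2. monom (c k) (N - 2*k)) i = (\<Sum>k\<le>N div 2. if k = (N - i) div 2 \<and> i \<le> N \<and> even (N - i) then c k else 0)"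
    unfolding coeff_sum coeff_monom
  proof (rule sum.cong[OF refl])
    fix k assume "k \<in> {..N div 2}"
    then have "2*k \<le> N" by auto
    then have "(N - 2*k = i) = (k = (N - i) div 2 \<and> i \<le> N \<and> even (N - i))" by auto
    then show "(if N - 2*k = i then c k else 0) = (if k = (N - i) div 2 \<and> i \<le> N \<and> even (N - i) then c k else 0)" by simp
  qed
  also have "\<dots> = (if i \<le> N \<and> even (N - i) then c ((N - i) div 2) else 0)"
  proof (cases "i \<le> N \<and> even (N - i)")
    case True
    then have le: "(N-i) div 2 \<le> N div 2" by (simp add: div_le_mono)
    show ?thesis unfolding if_P[OF True] using True by (simp only: True simp_thms) (simp add: sum.delta' le)
  next
    case False
    show ?thesis unfolding if_not_P[OF False] using False by (simp only: False simp_thms if_False sum.neutral_const)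
  qed
  finally show ?thesis .
qed

lemma poch_Suc_fact: "pochhammer (of_nat (Suc i) :: complex) m = fact (i+m) / fact i"
proof -
  have "(fact (i+m) :: complex) = fact i * pochhammer (1 + of_nat i) m"
    unfolding pochhammer_fact pochhammer_product' by simp
  then show ?thesis by (simp add: field_simps)
qed

definition RR :: "nat \<Rightarrow> complex poly" where "RR n = [:-1,0,1:]^n"

lemma RR_sum: "RR n = (\<Sum>k\<le>n. monom (of_nat (n choose k) * (-1)^(n-k)) (2*k))"
proof -
  have "[:-1,0,1:] = monom (1::complex) 2 + [:-1:]" by (simp add: monom_altdef power2_eq_square)
  then have "RR n = (monom (1::complex) 2 + [:-1:])^n" unfolding RR_def by simp
  also have "\<dots> = (\<Sum>k\<le>n. of_nat (n choose k) * monom 1 2 ^ k * [:-1:] ^ (n - k))"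
    by (rule binomial_ring)
  also have "\<dots> = (\<Sum>k\<le>n. monom (of_nat (n choose k) * (-1)^(n-k)) (2*k))"
    by (rule sum.cong[OF refl]) (simp add: monom_power of_nat_poly smult_monom pCons_one monom_0 [symmetric] mult_monom)
  finally show ?thesis .
qed

lemma coeff_RR: "coeff (RR n) j = (if even j \<and> j div 2 \<le> n then of_nat (n choose (j div 2)) * (-1)^(n - j div 2) else 0)"
proof -
  have "coeff (RR n) j = (\<Sum>k\<le>n. if k = j div 2 \<and> even j then of_nat (n choose k) * (-1)^(n-k) else 0)"
    unfolding RR_sum coeff_sum coeff_monom by (rule sum.cong[OF refl]) auto
  then show ?thesis by (auto simp: sum.delta')
qed

definition TT :: "nat \<Rightarrow> complex poly" where "TT n = monom 1 n * [:1,1:]^n"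

lemma coeff_s_pow: "coeff ([:1,1:]^n :: complex poly) i = (if i \<le> n then of_nat (n choose i) else 0)"
proof -
  have "[:1,1:] = monom (1::complex) 1 + 1" by (simp add: monom_altdef one_pCons)
  then have "([:1,1:]::complex poly)^n = (\<Sum>k\<le>n. of_nat (n choose k) * monom 1 1 ^ k * 1 ^ (n - k))"
    using binomial_ring[of "monom (1::complex) 1" 1 n] by simp
  also have "\<dots> = (\<Sum>k\<le>n. monom (of_nat (n choose k)) k)"
    by (rule sum.cong[OF refl]) (simp add: monom_power of_nat_poly smult_monom)
  finally show ?thesis by (simp add: coeff_sum coeff_monom)
qed

lemma coeff_TT: "coeff (TT n) (i + n) = (if i \<le> n then of_nat (n choose i) else 0)"
  unfolding TT_def coeff_monom_mult coeff_s_pow by simp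

definition ell :: "nat \<Rightarrow> nat \<Rightarrow> complex" where
  "ell n k = (-1)^k * of_nat (fact (2*n - 2*k)) / (2^n * of_nat (fact k) * of_nat (fact (n - k)) * of_nat (fact (n - 2*k)))"

definition LPp :: "nat \<Rightarrow> complex poly" where "LPp n = (\<Sum>k\<le>n div 2. monom (ell n k) (n - 2*k))"

lemma Legendre_poly: "Legendre_P n = poly (LPp n)"
  by (rule ext) (simp add: Legendre_P_def LPp_def ell_def poly_sum poly_monom)

lemma LP_rod: "LPp n = smult (1 / (2^n * fact n)) ((pderiv^^n) (RR n))"
proof (rule poly_eqI)
  fix i
  show "coeff (LPp n) i = coeff (smult (1 / (2^n * fact n)) ((pderiv^^n) (RR n))) i"
  proof (cases "i \<le> n \<and> even (n - i)")
    case True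
    define k where "k = (n - i) div 2"
    have i: "i = n - 2*k" "2*k \<le> n" using True unfolding k_def by auto
    have j: "(i + n) div 2 = n - k" "even (i+n)" "n - (n - k) = k" "i + n = 2*n - 2*k" using i by auto
    have "coeff (LPp n) i = ell n k" unfolding LPp_def coeff_par k_def by (rule if_P[OF True])
    moreover have "coeff (smult (1 / (2^n * fact n)) ((pderiv^^n) (RR n))) i
       = 1 / (2^n * fact n) * (fact (2*n - 2*k) / fact (n - 2*k)) * (of_nat (n choose (n-k)) * (-1)^k)"
      unfolding coeff_smult coeff_higher_pderiv poch_Suc_fact coeff_RR using j i by simp
    moreover have "\<dots> = ell n k"
      unfolding ell_def binomial_fact[OF diff_le_self] using i(2)
      by (simp add: field_simps)
    ultimately show ?thesis by simp
  next
    case False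
    have F2: "\<not> (even (i+n) \<and> (i+n) div 2 \<le> n)" using False by presburger
    have A: "coeff (LPp n) i = 0" unfolding LPp_def coeff_par by (rule if_not_P[OF False])
    have B: "coeff (RR n) (i+n) = 0" unfolding coeff_RR by (rule if_not_P[OF F2])
    show ?thesis by (simp add: coeff_higher_pderiv A B)
  qed
qed

lemma BQ0: "smult (4^n * (e/2)^n / (2^n * fact n)) ((pderiv^^n) (TT n)) = smult (e^n) (BW n 0 (\<lambda>_. 1))"
proof (rule poly_eqI)
  fix i
  have c: "(4::complex)^n * (e/2)^n / (2^n * fact n) = e^n / fact n"
  proof -
    have "(4::complex)^n = 2^n * 2^n" by (simp flip: power_mult_distrib)
    then show ?thesis by (simp add: power_divide)
  qed
  show "coeff (smult (4^n * (e/2)^n / (2^n * fact n)) ((pderiv^^n) (TT n))) i = coeff (smult (e^n) (BW n 0 (\<lambda>_. 1))) i"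
  proof (cases "i \<le> n")
    case True
    have "coeff (smult (4^n * (e/2)^n / (2^n * fact n)) ((pderiv^^n) (TT n))) i = e^n / fact n * (fact (i+n) / fact i) * (fact n / (fact i * fact (n - i)))"
      unfolding coeff_smult coeff_higher_pderiv poch_Suc_fact coeff_TT c using True by (simp add: binomial_fact)
    also have "\<dots> = e^n * (fact (i+n) / (fact i * fact i * fact (n - i)))"
      by (simp add: field_simps)
    also have "\<dots> = coeff (smult (e^n) (BW n 0 (\<lambda>_. 1))) i"
      unfolding coeff_smult BW_def coeff_monsum bc_def using True by simp
    finally show ?thesis .
  next
    case False
    then show ?thesis unfolding coeff_smult coeff_higher_pderiv coeff_TT BW_def coeff_monsum by simp
  qed
qed

definition tt :: "complex \<Rightarrow> complex \<Rightarrow> complex" where "tt e z = e * (z - e) / 2"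

lemma deriv_poly_fun: "deriv (poly p) = poly (pderiv p)"
  by (rule ext) (rule DERIV_imp_deriv[OF poly_DERIV])

lemma HD1: "(deriv^^m) (poly p) = poly ((pderiv^^m) p)"
  by (induction m) (simp_all add: deriv_poly_fun)

lemma has_deriv_tt: "((\<lambda>z. c * poly q (tt e z)) has_field_derivative c * (e/2) * poly (pderiv q) (tt e z)) (at z)"
proof -
  have t: "((tt e) has_field_derivative e/2) (at z)" unfolding tt_def
    by (auto intro!: derivative_eq_intros)
  have "((\<lambda>z. poly q (tt e z)) has_field_derivative poly (pderiv q) (tt e z) * (e/2)) (at z)"
    by (rule DERIV_chain2[OF poly_DERIV t])
  from DERIV_cmult[OF this, of c] show ?thesis by (simp add: ac_simps)
qed

lemma deriv_tt: "deriv (\<lambda>z. c * poly q (tt e z)) = (\<lambda>z. c * (e/2) * poly (pderiv q) (tt e z))"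
  by (rule ext) (rule DERIV_imp_deriv[OF has_deriv_tt])

lemma HD2: "(deriv^^m) (\<lambda>z. c * poly p (tt e z)) = (\<lambda>z. c * (e/2)^m * poly ((pderiv^^m) p) (tt e z))"
proof (induction m)
  case 0 then show ?case by simp
next
  case (Suc m)
  show ?case unfolding funpow.simps(2) comp_def Suc.IH deriv_tt by (simp add: ac_simps)
qed

lemma pderiv_BW_iter: "m \<le> n \<Longrightarrow> (pderiv^^m) (BW n 0 f) = BW n m f"
  by (induction m) (simp_all add: pderiv_BW)

lemma RR_TT: assumes e2: "e^2 = 1" shows "poly (RR n) = (\<lambda>z. 4^n * poly (TT n) (tt e z))"
proof (rule ext)
  fix z
  have "4 * tt e z * (1 + tt e z) = z*z - 1"
    unfolding tt_def using e2 by (simp add: field_simps power2_eq_square)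
  moreover have "poly (RR n) z = (z*z - 1)^n" unfolding RR_def by (simp add: poly_power algebra_simps)
  moreover have "4^n * poly (TT n) (tt e z) = 4^n * (tt e z^n * (1 + tt e z)^n)"
    unfolding TT_def by (simp add: poly_monom poly_power)
  moreover have "(4 * tt e z * (1 + tt e z))^n = 4^n * (tt e z^n * (1 + tt e z)^n)"
    by (simp add: power_mult_distrib mult.assoc)
  ultimately show "poly (RR n) z = 4^n * poly (TT n) (tt e z)" by simp
qed

lemma Leg_B: assumes e2: "e^2 = 1" shows "Legendre_P n = (\<lambda>z. e^n * poly (BW n 0 (\<lambda>_. 1)) (tt e z))"
proof (rule ext)
  fix z
  have "Legendre_P n z = 1 / (2^n * fact n) * (deriv^^n) (poly (RR n)) z"
    unfolding Legendre_poly LP_rod HD1 by simp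
  also have "\<dots> = 1 / (2^n * fact n) * (4^n * (e/2)^n * poly ((pderiv^^n) (TT n)) (tt e z))"
    unfolding RR_TT[OF e2] HD2 by simp
  also have "\<dots> = poly (smult (4^n * (e/2)^n / (2^n * fact n)) ((pderiv^^n) (TT n))) (tt e z)"
    by simp
  also have "\<dots> = e^n * poly (BW n 0 (\<lambda>_. 1)) (tt e z)" unfolding BQ0 by simp
  finally show "Legendre_P n z = e^n * poly (BW n 0 (\<lambda>_. 1)) (tt e z)" .
qed

lemma Leg_deriv: assumes e2: "e^2 = 1" and mn: "m \<le> n"
  shows "poly ((pderiv^^m) (LPp n)) z = e^(n+m)/2^m * poly (BW n m (\<lambda>_. 1)) (tt e z)"
proof -
  have "poly ((pderiv^^m) (LPp n)) z = (deriv^^m) (Legendre_P n) z" unfolding Legendre_poly HD1 ..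
  also have "\<dots> = e^n * (e/2)^m * poly (BW n m (\<lambda>_. 1)) (tt e z)"
    unfolding Leg_B[OF e2] HD2 pderiv_BW_iter[OF mn] ..
  also have "e^n * (e/2)^m = e^(n+m)/2^m" by (simp add: power_add power_divide)
  finally show ?thesis .
qed

lemma NUM: assumes "2*k + m \<le> n"
  shows "of_nat (fact (2*m)) / (2^m * of_nat (fact m)) * pochhammer (of_nat m + 1/2 :: complex) (n-m-k) * 2^(n-m-2*k)
     = of_nat (fact (2*n - 2*k)) / (2^n * of_nat (fact (n-k)))"
proof -
  define J where "J = n - k"
  have J: "2*n - 2*k = 2*J" "n - m - k = J - m" "J = m + (J - m)" using assms unfolding J_def by auto
  have p: "pochhammer (1/2::complex) J = pochhammer (1/2) m * pochhammer (of_nat m + 1/2) (J - m)"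
    using pochhammer_product'[of "1/2::complex" m "J-m"] J(3) by (simp add: add_ac)
  have fJ: "(fact (2*J) :: complex) = 2^(2*J) * pochhammer (1/2) J * fact J" by (rule fact_double)
  have fm: "(fact (2*m) :: complex) = 2^(2*m) * pochhammer (1/2) m * fact m" by (rule fact_double)
  have p1: "(2::complex)^(2*m) * 2^(n-m-2*k) = 2^m * 2^(n-2*k)"
    using assms by (simp flip: power_add)
  have p2: "(2::complex)^(2*J) = 2^n * 2^(n-2*k)"
  proof -
    have "2*J = n + (n-2*k)" using assms unfolding J_def by auto
    then show ?thesis by (simp add: power_add)
  qed
  have "of_nat (fact (2*m)) / (2^m * of_nat (fact m)) * pochhammer (of_nat m + 1/2 :: complex) (n-m-k) * 2^(n-m-2*k)
     = (2^(2*m) * 2^(n-m-2*k)) * pochhammer (1/2) m * pochhammer (of_nat m + 1/2 :: complex) (J-m) / 2^m"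
    unfolding of_nat_fact fm J(2) by (simp add: field_simps)
  also have "\<dots> = 2^(n-2*k) * pochhammer (1/2) J" unfolding p1 p by (simp add: field_simps)
  also have "\<dots> = of_nat (fact (2*n - 2*k)) / (2^n * of_nat (fact (n-k)))"
    unfolding of_nat_fact J(1) fJ p2 J_def[symmetric] by (simp add: field_simps)
  finally show ?thesis .
qed

definition gg :: "nat \<Rightarrow> nat \<Rightarrow> nat \<Rightarrow> complex" where
  "gg n m k = of_nat (fact (2*m)) / (2^m * of_nat (fact m)) * pochhammer (of_nat m + 1/2 :: complex) (n-m-k) * 2^(n-m-2*k)
     * ((-1)^k / (of_nat (fact k) * of_nat (fact (n-m-2*k))))"

definition GG :: "nat \<Rightarrow> nat \<Rightarrow> complex poly" where
  "GG n m = (\<Sum>k\<le>(n-m) div 2. monom (gg n m k) (n-m-2*k))"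

lemma Geg_poly: "of_nat (fact (2*m)) / (2^m * of_nat (fact m)) * Gegenbauer_C (n - m) (of_nat m + 1/2) z = poly (GG n m) z"
  unfolding Gegenbauer_C_def GG_def gg_def poly_sum poly_monom sum_distrib_left
  by (rule sum.cong[OF refl]) (simp add: power_mult_distrib ac_simps)

lemma GG_eq: assumes mn: "m \<le> n" shows "GG n m = (pderiv^^m) (LPp n)"
proof (rule poly_eqI)
  fix i
  show "coeff (GG n m) i = coeff ((pderiv^^m) (LPp n)) i"
  proof (cases "i \<le> n - m \<and> even (n - m - i)")
    case True
    define k where "k = (n - m - i) div 2"
    have i: "i = n - m - 2*k" "2*k + m \<le> n" "i + m = n - 2*k" "n - (i+m) = n - m - i" using True mn unfolding k_def by auto
    have c2: "i + m \<le> n \<and> even (n - m - i)" using True mn by auto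
    have "coeff (GG n m) i = gg n m k" unfolding GG_def coeff_par k_def by (rule if_P[OF True])
    also have "\<dots> = of_nat (fact (2*n - 2*k)) / (2^n * of_nat (fact (n-k))) * ((-1)^k / (of_nat (fact k) * of_nat (fact (n-m-2*k))))"
      unfolding gg_def NUM[OF i(2)] ..
    also have "\<dots> = fact (i+m) / fact i * ell n k"
    proof -
      have ee: "m + (n - (m + k*2)) = n - k*2" using i(2) by simp
      show ?thesis unfolding ell_def i(3) i(1) by (simp add: field_simps ee)
    qed
    also have "\<dots> = coeff ((pderiv^^m) (LPp n)) i"
      unfolding coeff_higher_pderiv poch_Suc_fact LPp_def coeff_par if_P[OF c2] i(4) k_def ..
    finally show ?thesis .
  next
    case False
    have c2: "\<not> (i + m \<le> n \<and> even (n - (i+m)))" using False mn by (auto simp: add.commute diff_diff_left)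
    have A: "coeff (GG n m) i = 0" unfolding GG_def coeff_par by (rule if_not_P[OF False])
    have B: "coeff (LPp n) (i+m) = 0" unfolding LPp_def coeff_par by (rule if_not_P[OF c2])
    show ?thesis by (simp add: coeff_higher_pderiv A B)
  qed
qed

lemma Geg_B: assumes e2: "e^2 = 1" and mn: "m \<le> n"
  shows "of_nat (fact (2*m)) / (2^m * of_nat (fact m)) * Gegenbauer_C (n - m) (of_nat m + 1/2) z = e^(n+m)/2^m * poly (BW n m (\<lambda>_. 1)) (tt e z)"
  unfolding Geg_poly GG_eq[OF mn] Leg_deriv[OF e2 mn] ..

definition G :: "nat \<Rightarrow> complex \<Rightarrow> nat \<Rightarrow> complex \<Rightarrow> complex" where
  "G n e m w = e^(n+m)/2^m * poly (BW n m (\<lambda>_. 1)) (tt e w) * Ln (w + e)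
     + (Digamma (of_nat (n+1)) - Digamma (of_nat (n-m+1))) * (e^(n+m)/2^m * poly (BW n m (\<lambda>_. 1)) (tt e w))
     - e^(n+m)/2^m * poly (BW n m psi) (tt e w)
     + e^n * KK n m * inverse ((w+e)^m) * poly (DW n m psi) (tt e w)"

lemma BW_DW0: "BW n 0 f = DW n 0 f"
  unfolding BW_def DW_def bc_def dc_def by simp

lemma G0: assumes e2: "e^2 = 1" shows "G n e 0 w = Legendre_P n w * Ln (w + e)"
  unfolding G_def Leg_B[OF e2] BW_DW0 by (simp add: KK_def)

lemma has_deriv_tt1: "((\<lambda>z. poly q (tt e z)) has_field_derivative (e/2) * poly (pderiv q) (tt e z)) (at z)"
  using has_deriv_tt[of 1 q e z] by simp

lemma has_deriv_inv_pow: fixes w e :: complex assumes "w + e \<noteq> 0"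
  shows "((\<lambda>w. inverse ((w+e)^m)) has_field_derivative - of_nat m * inverse ((w+e)^Suc m)) (at w)"
proof -
  have s: "((\<lambda>w. w + e) has_field_derivative 1) (at w)" by (auto intro!: derivative_eq_intros)
  have "((\<lambda>w. inverse ((w+e)^m)) has_field_derivative - ((of_nat m * (1 * (w+e)^(m - Suc 0))) * inverse (((w+e)^m) ^ Suc (Suc 0)))) (at w)"
    by (rule DERIV_inverse_fun[OF DERIV_power[OF s]]) (simp add: assms)
  moreover have "- ((of_nat m * (1 * (w+e)^(m - Suc 0))) * inverse (((w+e)^m) ^ Suc (Suc 0))) = - of_nat m * inverse ((w+e)^Suc m)"
  proof (cases m)
    case 0 then show ?thesis by simp
  next
    case (Suc k)
    define x where "x = w + e"
    have x: "x \<noteq> 0" "x^k \<noteq> 0" using assms unfolding x_def by auto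
    have "(x^Suc k)^Suc (Suc 0) = x^(Suc k * Suc(Suc 0))" by (simp only: power_mult)
    also have "Suc k * Suc (Suc 0) = k + Suc (Suc k)" by simp
    also have "x^(k + Suc(Suc k)) = x^k * x^Suc(Suc k)" by (simp only: power_add)
    finally have p: "(x^Suc k)^Suc (Suc 0) = x^k * x^Suc(Suc k)" .
    have q: "x^k * (inverse (x^k) * y) = y" for y using x(2) by (simp add: mult.assoc[symmetric])
    show ?thesis unfolding Suc x_def[symmetric] p using x
      by (simp add: inverse_mult_distrib mult.assoc q del: power_Suc) (simp add: algebra_simps)
  qed
  ultimately show ?thesis by (rule DERIV_cong)
qed

lemma has_deriv_Ln_shift: fixes w e :: complex assumes "w + e \<notin> \<real>\<^sub>\<le>\<^sub>0"
  shows "((\<lambda>w. Ln (w + e)) has_field_derivative inverse (w + e)) (at w)"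
proof -
  have "((\<lambda>w. w + e) has_field_derivative 1) (at w)" by (auto intro!: derivative_eq_intros)
  from DERIV_chain2[OF has_field_derivative_Ln[OF assms] this] show ?thesis by simp
qed

lemma fin:
  fixes E G' L iW iWm iWm1 c1 c1' h A A1 B1 D Dd D1 DQ DQ1 K K' eN ss cst r M :: complex
  assumes "c1*h = c1'" "c1*A = eN*K*DQ*iWm" "c1'*A1 = eN*K'*DQ1*iWm1" "iW*iWm = iWm1" "h*iWm = ss*iWm1"
    "K*DQ - K'*r*DQ1 = K*(M*D - ss*Dd) + K'*D1"
  shows "c1*(h*A1)*L + iW*(c1*A) + cst*(c1*(h*A1)) - c1*(h*B1) + (eN*K*(-M*iWm1))*D + (h*Dd)*(eN*K*iWm)
     = c1'*A1*L + (cst + r)*(c1'*A1) - c1'*B1 + eN*K'*iWm1*D1"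
proof -
  have s1: "c1*(h*A1) = c1'*A1" "c1*(h*B1) = c1'*B1" using assms(1) by (simp_all add: mult.assoc[symmetric])
  have s2: "iW*(c1*A) = eN*K*DQ*iWm1" using assms(2,4) by (metis mult.assoc mult.commute)
  have s3: "(h*Dd)*(eN*K*iWm) = eN * K * ss * Dd * iWm1"
  proof -
    have "(h*Dd)*(eN*K*iWm) = (h*iWm)*(eN*K*Dd)" by (simp add: ac_simps)
    then show ?thesis using assms(5) by (simp add: ac_simps)
  qed
  have "c1*(h*A1)*L + iW*(c1*A) + cst*(c1*(h*A1)) - c1*(h*B1) + (eN*K*(-M*iWm1))*D + (h*Dd)*(eN*K*iWm)
     - (c1'*A1*L + (cst + r)*(c1'*A1) - c1'*B1 + eN*K'*iWm1*D1)
     = eN*iWm1*((K*DQ - K'*r*DQ1) - (K*(M*D - ss*Dd) + K'*D1))"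
    unfolding s1 s2 s3 assms(3) by (simp add: algebra_simps)
  then show ?thesis using assms(6) by simp
qed

lemma one_plus_tt: assumes e2: "e^2 = 1" shows "1 + tt e w = e * (w + e) / 2"
  unfolding tt_def using e2 by (simp add: field_simps power2_eq_square)

lemma F1: assumes e2: "e^2 = 1" and mn: "m \<le> n" and W: "w + e \<noteq> 0"
  shows "e^(n+m)/2^m * poly (BW n m (\<lambda>_. 1)) (tt e w) = e^n * KK n m * poly (DW n m (\<lambda>_. 1)) (tt e w) * inverse ((w+e)^m)"
proof -
  define A where "A = poly (BW n m (\<lambda>_. 1)) (tt e w)"
  define DQ where "DQ = poly (DW n m (\<lambda>_. 1)) (tt e w)"
  have "poly ([:1,1:]^m * BW n m (\<lambda>_. 1)) (tt e w) = poly (smult (KK n m) (DW n m (\<lambda>_. 1))) (tt e w)"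
    using C_id[OF mn] by simp
  then have "(1 + tt e w)^m * A = KK n m * DQ" unfolding A_def DQ_def by (simp add: poly_power)
  then have h: "e^m * (w+e)^m / 2^m * A = KK n m * DQ" unfolding one_plus_tt[OF e2] by (simp add: power_divide power_mult_distrib)
  have em: "e^m \<noteq> 0" using e2 by (auto simp: power2_eq_square)
  have "e^(n+m)/2^m * A = e^n * (e^m * (w+e)^m / 2^m * A) * inverse ((w+e)^m)"
    using W by (simp add: power_add field_simps)
  also have "\<dots> = e^n * KK n m * DQ * inverse ((w+e)^m)" unfolding h by simp
  finally show ?thesis unfolding A_def DQ_def .
qed

lemma G_deriv: fixes e w :: complex
  assumes e2: "e^2 = 1" and mn: "m < n" and w: "w + e \<notin> \<real>\<^sub>\<le>\<^sub>0"
  shows "(G n e m has_field_derivative G n e (Suc m) w) (at w)"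
proof -
  have W: "w + e \<noteq> 0" using w by auto
  define c1 where "c1 = e^(n+m)/2^m"
  define cst :: complex where "cst = Digamma (of_nat (n+1)) - Digamma (of_nat (n-m+1))"
  define c4 where "c4 = e^n * KK n m"
  let ?qA = "BW n m (\<lambda>_. 1)" and ?qB = "BW n m psi" and ?qD = "DW n m psi"
  note hA = has_deriv_tt1[of ?qA e w] and hB = has_deriv_tt1[of ?qB e w] and hD = has_deriv_tt1[of ?qD e w]
  note hL = has_deriv_Ln_shift[OF w] and hI = has_deriv_inv_pow[OF W, of m]
  note d1 = DERIV_mult[OF DERIV_cmult[OF hA, of c1] hL]
  note d2 = DERIV_cmult[OF DERIV_cmult[OF hA, of c1], of cst]
  note d3 = DERIV_cmult[OF hB, of c1]
  note d4 = DERIV_mult[OF DERIV_cmult[OF hI, of c4] hD]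
  note D = DERIV_add[OF DERIV_diff[OF DERIV_add[OF d1 d2] d3] d4]
  have Gm: "G n e m = (\<lambda>w. c1 * poly ?qA (tt e w) * Ln (w + e) + cst * (c1 * poly ?qA (tt e w)) - c1 * poly ?qB (tt e w) + c4 * inverse ((w+e)^m) * poly ?qD (tt e w))"
    unfolding G_def c1_def cst_def c4_def by (rule ext) simp
  show ?thesis unfolding Gm
  proof (rule DERIV_cong[OF D])
    show "c1 * (e / 2 * poly (pderiv ?qA) (tt e w)) * Ln (w + e) + inverse (w + e) * (c1 * poly ?qA (tt e w))
      + cst * (c1 * (e / 2 * poly (pderiv ?qA) (tt e w))) - c1 * (e / 2 * poly (pderiv ?qB) (tt e w))
      + (c4 * (- of_nat m * inverse ((w + e) ^ Suc m)) * poly ?qD (tt e w) + e / 2 * poly (pderiv ?qD) (tt e w) * (c4 * inverse ((w + e) ^ m)))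
      = G n e (Suc m) w"
    proof -
      define t where "t = tt e w"
      define c1' where "c1' = e^(n+Suc m)/2^Suc m"
      define r :: complex where "r = 1 / (of_nat n - of_nat m)"
      have nm0: "(of_nat n - of_nat m :: complex) \<noteq> 0" using mn by simp
      have pA: "pderiv ?qA = BW n (Suc m) (\<lambda>_. 1)" and pB: "pderiv ?qB = BW n (Suc m) psi"
        using pderiv_BW[OF mn] by auto
      have h1: "c1 * (e/2) = c1'" unfolding c1_def c1'_def by (simp add: field_simps)
      have h2: "c1 * poly ?qA t = e^n * KK n m * poly (DW n m (\<lambda>_. 1)) t * inverse ((w+e)^m)"
        unfolding c1_def t_def by (rule F1[OF e2 less_imp_le[OF mn] W])
      have h3: "c1' * poly (BW n (Suc m) (\<lambda>_. 1)) t = e^n * KK n (Suc m) * poly (DW n (Suc m) (\<lambda>_. 1)) t * inverse ((w+e)^Suc m)"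
        unfolding c1'_def t_def by (rule F1[OF e2 _ W]) (use mn in simp)
      have h4: "inverse (w+e) * inverse ((w+e)^m) = inverse ((w+e)^Suc m)" by simp
      have h5: "e/2 * inverse ((w+e)^m) = (1 + t) * inverse ((w+e)^Suc m)"
      proof -
        have "(e * (w + e) / 2) * inverse ((w+e)^Suc m) = e/2 * ((w+e) * inverse (w+e)) * inverse ((w+e)^m)"
          by (simp add: ac_simps)
        also have "\<dots> = e/2 * inverse ((w+e)^m)" using W by simp
        finally show ?thesis unfolding t_def one_plus_tt[OF e2] by simp
      qed
      have h6: "KK n m * poly (DW n m (\<lambda>_. 1)) t - KK n (Suc m) * r * poly (DW n (Suc m) (\<lambda>_. 1)) t
          = KK n m * (of_nat m * poly ?qD t - (1 + t) * poly (pderiv ?qD) t) + KK n (Suc m) * poly (DW n (Suc m) psi) t"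
      proof -
        have "poly (smult (KK n m) (DW n m (\<lambda>_. 1)) - smult (KK n (Suc m) / (of_nat n - of_nat m)) (DW n (Suc m) (\<lambda>_. 1))) t
          = poly (smult (KK n m) (smult (of_nat m) (DW n m psi) - [:1,1:] * pderiv (DW n m psi)) + smult (KK n (Suc m)) (DW n (Suc m) psi)) t"
          using M_step[OF mn] by simp
        then show ?thesis unfolding r_def by (simp add: algebra_simps)
      qed
      have h7: "Digamma (of_nat (n+1)) - Digamma (of_nat (n - Suc m + 1)) = cst + r"
      proof -
        have e1: "n - Suc m + 1 = n - m" "n - m + 1 = Suc (n - m)" using mn by auto
        have z: "(of_nat (n - m) :: complex) \<noteq> 0" using mn by simp
        have "Digamma (of_nat (Suc (n - m)) :: complex) = Digamma (of_nat (n-m) + 1)" by (simp add: add.commute)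
        also have "\<dots> = Digamma (of_nat (n-m)) + 1 / of_nat (n-m)" by (rule Digamma_plus1[OF z])
        finally show ?thesis unfolding cst_def r_def e1 using mn by (simp add: of_nat_diff)
      qed
      note fin[OF h1 h2 h3 h4 h5 h6, of "Ln (w+e)" cst "poly (BW n (Suc m) psi) t"]
      then show ?thesis unfolding G_def h7 c1'_def[symmetric] c4_def t_def[symmetric] pA pB
        by (simp only: add.assoc)
    qed
  qed
qed

lemma main_ind:
  fixes e :: complex
  assumes e2: "e^2 = 1"
  shows "m \<le> n \<Longrightarrow> \<forall>w. w + e \<notin> \<real>\<^sub>\<le>\<^sub>0 \<longrightarrow> (deriv^^m) (\<lambda>w. Legendre_P n w * Ln (w + e)) w = G n e m w"
proof (induction m)
  case 0
  then show ?case using G0[OF e2] by simp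
next
  case (Suc m)
  then have mn: "m < n" by simp
  have IH: "\<forall>w. w + e \<notin> \<real>\<^sub>\<le>\<^sub>0 \<longrightarrow> (deriv^^m) (\<lambda>w. Legendre_P n w * Ln (w + e)) w = G n e m w"
    using Suc.IH mn by simp
  define U where "U = (\<lambda>x. x + e) -` (- \<real>\<^sub>\<le>\<^sub>0)"
  have oU: "open U" unfolding U_def
    by (rule continuous_open_vimage) (auto intro!: continuous_intros)
  show ?case
  proof (intro allI impI)
    fix w assume w: "w + e \<notin> \<real>\<^sub>\<le>\<^sub>0"
    have wU: "w \<in> U" unfolding U_def using w by simp
    have ev: "eventually (\<lambda>x. (deriv^^m) (\<lambda>w. Legendre_P n w * Ln (w + e)) x = G n e m x) (nhds w)"
      using eventually_nhds_in_open[OF oU wU] by eventually_elim (use IH in \<open>auto simp: U_def\<close>)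
    have "(deriv^^Suc m) (\<lambda>w. Legendre_P n w * Ln (w + e)) w = deriv ((deriv^^m) (\<lambda>w. Legendre_P n w * Ln (w + e))) w"
      by simp
    also have "\<dots> = deriv (G n e m) w" by (rule deriv_cong_ev[OF ev refl])
    also have "\<dots> = G n e (Suc m) w" by (rule DERIV_imp_deriv[OF G_deriv[OF e2 mn w]])
    finally show "(deriv^^Suc m) (\<lambda>w. Legendre_P n w * Ln (w + e)) w = G n e (Suc m) w" .
  qed
qed

lemma tt_alt: "tt e z = e * ((z - e)/2)" by (simp add: tt_def)

lemma poly_BWpsi: "poly (BW n m psi) (tt e z) = (\<Sum>k\<le>n - m. e^k * of_nat (fact (k + n + m)) * Digamma (of_nat (k + n + m + 1))
        / (of_nat (fact k) * of_nat (fact (k + m)) * of_nat (fact (n - m - k))) * ((z - e) / 2)^k)"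
  unfolding BW_def poly_sum poly_monom
  by (rule sum.cong[OF refl]) (simp only: tt_alt power_mult_distrib, simp add: bc_def psi_def ac_simps)

lemma poly_DWpsi: "poly (DW n m psi) (tt e z) = (\<Sum>k\<le>n. e^k * of_nat (fact (k + n)) * Digamma (of_nat (k + n + 1))
        / (of_nat (fact k) * of_nat (fact (k + m)) * of_nat (fact (n - k))) * ((z - e) / 2)^k)"
  unfolding DW_def poly_sum poly_monom
  by (rule sum.cong[OF refl]) (simp only: tt_alt power_mult_distrib, simp add: dc_def psi_def ac_simps)

theorem mainTheorem1:
  fixes m n :: nat and \<epsilon> z :: complex
  assumes "m \<le> n"
    and "\<epsilon> = 1 \<or> \<epsilon> = -1"
    and "z \<notin> complex_of_real ` {..1}"
  shows "(deriv ^^ m) (\<lambda>w. Legendre_P n w * Ln (w + \<epsilon>)) z =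
      of_nat (fact (2*m)) / (2^m * of_nat (fact m)) * Gegenbauer_C (n - m) (of_nat m + 1/2) z * Ln (z + \<epsilon>)
    + of_nat (fact (2*m)) / (2^m * of_nat (fact m))
        * (Digamma (of_nat (n + 1)) - Digamma (of_nat (n - m + 1))) * Gegenbauer_C (n - m) (of_nat m + 1/2) z
    - \<epsilon>^(n+m) / 2^m * (\<Sum>k\<le>n - m. \<epsilon>^k * of_nat (fact (k + n + m)) * Digamma (of_nat (k + n + m + 1))
        / (of_nat (fact k) * of_nat (fact (k + m)) * of_nat (fact (n - m - k))) * ((z - \<epsilon>) / 2)^k)
    + \<epsilon>^n * of_nat (fact (n + m)) / of_nat (fact (n - m)) * inverse ((z + \<epsilon>)^m)
        * (\<Sum>k\<le>n. \<epsilon>^k * of_nat (fact (k + n)) * Digamma (of_nat (k + n + 1))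
        / (of_nat (fact k) * of_nat (fact (k + m)) * of_nat (fact (n - k))) * ((z - \<epsilon>) / 2)^k)" (is "_ = ?rhs")
proof -
  have e2: "\<epsilon>^2 = 1" using assms(2) by auto
  have zc: "z + \<epsilon> \<notin> \<real>\<^sub>\<le>\<^sub>0"
  proof
    assume "z + \<epsilon> \<in> \<real>\<^sub>\<le>\<^sub>0"
    then have r: "Re (z + \<epsilon>) \<le> 0" "Im (z + \<epsilon>) = 0" by (auto simp: complex_nonpos_Reals_iff)
    have "z = complex_of_real (Re z)" using r assms(2) by (auto simp: complex_eq_iff)
    moreover have "Re z \<le> 1" using r assms(2) by auto
    ultimately have "z \<in> complex_of_real ` {..1}" by auto
    then show False using assms(3) by simp
  qed
  have "(deriv ^^ m) (\<lambda>w. Legendre_P n w * Ln (w + \<epsilon>)) z = G n \<epsilon> m z"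
    using main_ind[OF e2 assms(1)] zc by blast
  also have "\<dots> = ?rhs"
  proof -
    note cg = Geg_B[OF e2 assms(1), of z]
    let ?c = "of_nat (fact (2*m)) / (2^m * of_nat (fact m)) :: complex"
    let ?Ge = "Gegenbauer_C (n - m) (of_nat m + 1/2) z"
    have r1: "?c * (Digamma (of_nat (n + 1)) - Digamma (of_nat (n - m + 1))) * ?Ge = (Digamma (of_nat (n + 1)) - Digamma (of_nat (n - m + 1))) * (?c * ?Ge)"
      by (simp add: ac_simps)
    show ?thesis unfolding r1 cg G_def poly_BWpsi poly_DWpsi KK_def by (simp add: times_divide_eq_right)
  qed
  finally show ?thesis .
qed

end
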